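(* Let $X_1,X_2,\dots$ be real random variables on a probability space with $\mathbb E X_n=0$, and suppose there are constants $M<\infty$, $C<\infty$ and $0\le\gamma<2$ such that $\|X_n\|_\infty\le M$ and $\operatorname{Var}\big(\sum_{k=1}^nX_k\big)\le Cn^\gamma$ for all $n$. Then for every $\eta>\frac{\gamma+1}{3}$, $\sum_{k=1}^nX_k=O(n^\eta)$ almost surely.
   Context: No independence is assumed among the $X_n$. *)

theory Defs
  imports "HOL-Probability.Probability" "HOL-Library.Landau_Symbols"
begin

end

theory Submission
  imports Defs
begin

lemma powr_diff_bound:
  fixes k p :: real
  assumes "1 \<le> p" "0 < k"
  shows "(k+1) powr p - k powr p \<le> p * (k+1) powr (p-1)"
proof -
  have "\<exists>z. k < z \<and> z < k+1 \<and> ((k+1) powr p - k powr p = ((k+1) - k) * (p * z powr (p-1)))"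
    by (rule MVT2) (use assms in \<open>auto intro!: has_real_derivative_powr\<close>)
  then obtain z where z: "k < z" "z < k+1" "(k+1) powr p - k powr p = p * z powr (p-1)" by auto
  have "z powr (p-1) \<le> (k+1) powr (p-1)"
    using z assms by (intro powr_mono2) auto
  then show ?thesis using z assms by (simp add: mult_left_mono)
qed

theorem mainTheorem8:
  fixes M :: "'a measure" and X :: "nat \<Rightarrow> 'a \<Rightarrow> real"
    and B C \<gamma> \<eta> :: real
  assumes "prob_space M"
    and rv: "\<And>n. n \<ge> 1 \<Longrightarrow> X n \<in> borel_measurable M"
    and mean0: "\<And>n. n \<ge> 1 \<Longrightarrow> prob_space.expectation M (X n) = 0"
    and bdd: "\<And>n. n \<ge> 1 \<Longrightarrow> (AE x in M. \<bar>X n x\<bar> \<le> B)"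
    and var: "\<And>n. n \<ge> 1 \<Longrightarrow>
       prob_space.variance M (\<lambda>x. \<Sum>k=1..n. X k x) \<le> C * real n powr \<gamma>"
    and "0 \<le> \<gamma>" and "\<gamma> < 2"
    and "\<eta> > (\<gamma> + 1) / 3"
  shows "AE x in M. (\<lambda>n. \<Sum>k=1..n. X k x) \<in> O(\<lambda>n. real n powr \<eta>)"
proof -
  interpret prob_space M by fact
  define S where "S = (\<lambda>n x. \<Sum>k=1..n. X k x)"
  have Smeas[measurable]: "S n \<in> borel_measurable M" for n
    unfolding S_def by (intro borel_measurable_sum) (use rv in auto)
  have AEall: "AE x in M. \<forall>i. i \<ge> 1 \<longrightarrow> \<bar>X i x\<bar> \<le> B"
    unfolding AE_all_countable using bdd by (auto intro: AE_mp)
  have intX: "integrable M (X i)" if "i \<ge> 1" for i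
    by (rule integrable_const_bound[where B=B]) (use bdd[OF that] rv[OF that] in auto)
  have AES: "AE x in M. \<bar>S n x\<bar> \<le> real n * B" for n
    using AEall
  proof (rule AE_mp, intro AE_I2 impI)
    fix x assume h: "\<forall>i. i \<ge> 1 \<longrightarrow> \<bar>X i x\<bar> \<le> B"
    have "\<bar>S n x\<bar> \<le> (\<Sum>k=1..n. \<bar>X k x\<bar>)" unfolding S_def by (rule sum_abs)
    also have "\<dots> \<le> of_nat (card {1..n}) * B" by (rule sum_bounded_above) (use h in auto)
    finally show "\<bar>S n x\<bar> \<le> real n * B" by simp
  qed
  have intS2: "integrable M (\<lambda>x. S n x ^ 2)" for n
  proof (rule integrable_const_bound[where B="(real n * B)^2"])
    show "AE x in M. norm (S n x ^ 2) \<le> (real n * B)^2"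
      using AES[of n] by eventually_elim (metis abs_ge_zero power2_abs power_mono real_norm_def abs_power2)
  qed simp
  have ES: "expectation (S n) = 0" if "n \<ge> 1" for n
    unfolding S_def by (subst Bochner_Integration.integral_sum) (use intX mean0 in auto)
  have varS: "variance (S n) \<le> C * real n powr \<gamma>" if "n \<ge> 1" for n
    using var[OF that] unfolding S_def by simp
  have C0: "0 \<le> C"
  proof -
    have "0 \<le> variance (S 1)" by (rule integral_nonneg_AE) auto
    also have "\<dots> \<le> C" using varS[of 1] by simp
    finally show ?thesis .
  qed
  define \<eta>0 where "\<eta>0 = min \<eta> ((\<gamma>+4)/6)"
  have e1: "\<eta>0 > (\<gamma>+1)/3" "\<eta>0 \<le> \<eta>" "\<eta>0 < 1" "\<eta>0 > 0"
    using assms(6-8) unfolding \<eta>0_def by (auto simp: min_def)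
  define p where "p = 1 / (1 - \<eta>0)"
  have p1: "p \<ge> 1" "p > 0" using e1 unfolding p_def by (auto simp: field_simps)
  have pe: "p - 1 = p * \<eta>0" using e1 unfolding p_def by (auto simp: field_simps)
  have pe2: "(p-1)/p = \<eta>0" using pe p1 by simp
  define e where "e = p * (\<gamma> - 2*\<eta>0)"
  have eneg: "e < -1"
  proof -
    have "1 - \<eta>0 < 2*\<eta>0 - \<gamma>" using e1 by simp
    hence "p * (1 - \<eta>0) < p * (2*\<eta>0 - \<gamma>)" using p1 by simp
    moreover have "p * (1 - \<eta>0) = 1" using e1 unfolding p_def by simp
    ultimately show ?thesis unfolding e_def by (simp add: algebra_simps)
  qed
  have ge0: "\<gamma> - 2*\<eta>0 \<le> 0" using e1 assms(6-8) by simp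
  define g where "g k = nat \<lceil>real k powr p\<rceil>" for k
  have gge: "real (g k) \<ge> real k powr p" for k
  proof -
    have c0: "0 \<le> \<lceil>real k powr p\<rceil>" using powr_ge_zero[of "real k" p] by linarith
    show ?thesis using c0 le_of_int_ceiling[of "real k powr p"] unfolding g_def by simp
  qed
  define A where "A k = {x\<in>space M. real (g k) powr \<eta>0 \<le> \<bar>S (g k) x\<bar>}" for k
  have Ameas: "A k \<in> sets M" for k unfolding A_def by measurable
  have Abound: "measure M (A k) \<le> C * real k powr e" if "k \<ge> 1" for k
  proof -
    define m where "m = g k"
    have k1: "real k powr p \<ge> 1" using that p1 by (simp add: ge_one_powr_ge_zero)
    have mge: "real m \<ge> real k powr p" unfolding m_def by (rule gge)
    have m1: "m \<ge> 1" using mge k1 by linarith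
    have mpos: "real m > 0" using m1 by simp
    have "measure M (A k) = prob {x\<in>space M. real m powr \<eta>0 \<le> \<bar>S m x - expectation (S m)\<bar>}"
      unfolding A_def m_def using ES[OF m1[unfolded m_def]] by simp
    also have "\<dots> \<le> variance (S m) / (real m powr \<eta>0)^2"
      by (rule Chebyshev_inequality) (use intS2 mpos in auto)
    also have "\<dots> \<le> C * real m powr \<gamma> / (real m powr \<eta>0)^2"
      by (rule divide_right_mono) (use varS[OF m1] in auto)
    also have "(real m powr \<eta>0)^2 = real m powr (2*\<eta>0)"
      by (simp add: power2_eq_square powr_add[symmetric])
    also have "C * real m powr \<gamma> / real m powr (2*\<eta>0) = C * real m powr (\<gamma> - 2*\<eta>0)"
      by (simp add: powr_diff)
    also have "\<dots> \<le> C * (real k powr p) powr (\<gamma> - 2*\<eta>0)"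
      by (rule mult_left_mono[OF powr_mono2'[OF ge0]]) (use C0 k1 mge that in auto)
    also have "\<dots> = C * real k powr e" unfolding e_def by (simp add: powr_powr)
    finally show ?thesis .
  qed
  have summ: "summable (\<lambda>k. measure M (A k))"
  proof (rule summable_comparison_test'[where N=1])
    show "summable (\<lambda>k. C * real k powr e)"
      by (rule summable_mult) (use eneg summable_real_powr_iff in auto)
    show "norm (measure M (A k)) \<le> C * real k powr e" if "k \<ge> 1" for k
      using Abound[OF that] by simp
  qed
  have AEev: "AE x in M. eventually (\<lambda>k. x \<in> space M - A k) sequentially"
    by (rule borel_cantelli_AE1) (use Ameas summ in \<open>auto simp: emeasure_finite less_top[symmetric]\<close>)
  show ?thesis
    using AEev AEall
  proof (rule AE_mp[OF AE_conjI], intro AE_I2 impI, elim conjE)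
    fix x
    assume ev: "eventually (\<lambda>k. x \<in> space M - A k) sequentially"
      and h: "\<forall>i. i \<ge> 1 \<longrightarrow> \<bar>X i x\<bar> \<le> B"
    obtain K where K: "\<And>k. k \<ge> K \<Longrightarrow> \<bar>S (g k) x\<bar> < real (g k) powr \<eta>0"
      using ev unfolding eventually_sequentially A_def by (auto simp: not_le)
    define D where "D = p * 2 powr (p-1)"
    have D0: "D \<ge> 0" unfolding D_def using p1 by simp
    define N where "N = nat \<lceil>(real K + 1) powr p\<rceil>"
    have bnd: "\<bar>S n x\<bar> \<le> (1 + D * \<bar>B\<bar>) * real n powr \<eta>" if nN: "n \<ge> N" for n
    proof -
      have KN: "(real K + 1) powr p \<le> real n"
        using nN unfolding N_def by (simp add: nat_le_iff ceiling_le_iff)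
      have K1: "(real K + 1) powr p \<ge> 1" using p1 by (simp add: ge_one_powr_ge_zero)
      have n1: "real n \<ge> 1" using KN K1 by linarith
      define r where "r = real n powr (1/p)"
      define k where "k = nat \<lfloor>r\<rfloor>"
      have r0: "r \<ge> 0" unfolding r_def by simp
      have Kr: "real K + 1 \<le> r"
      proof -
        have "real K + 1 = ((real K + 1) powr p) powr (1/p)" using p1 by (simp add: powr_powr)
        also have "\<dots> \<le> r" unfolding r_def using KN p1 by (intro powr_mono2) auto
        finally show ?thesis .
      qed
      have kr: "real k \<le> r" "r < real k + 1" unfolding k_def using r0 by linarith+
      have kK: "k \<ge> K + 1" using Kr kr by linarith
      have rp: "r powr p = real n" unfolding r_def using p1 n1 by (simp add: powr_powr)
      have kpn: "real k powr p \<le> real n" using kr rp p1 by (metis less_imp_le of_nat_0_le_iff powr_mono2)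
      have nk1: "real n < (real k + 1) powr p" using kr rp p1 r0 by (metis powr_less_mono2)
      define m where "m = g k"
      have mge: "real m \<ge> real k powr p" unfolding m_def by (rule gge)
      have mn: "m \<le> n"
        using kpn unfolding m_def g_def by (simp add: nat_le_iff ceiling_le_iff)
      have split: "S n x = S m x + (\<Sum>j\<in>{m+1..n}. X j x)"
      proof -
        have "{1..n} = {1..m} \<union> {m+1..n}" using mn by auto
        then show ?thesis unfolding S_def by (simp add: sum.union_disjoint)
      qed
      have T: "\<bar>\<Sum>j\<in>{m+1..n}. X j x\<bar> \<le> real (n - m) * B"
      proof -
        have "\<bar>\<Sum>j\<in>{m+1..n}. X j x\<bar> \<le> (\<Sum>j\<in>{m+1..n}. \<bar>X j x\<bar>)" by (rule sum_abs)
        also have "\<dots> \<le> of_nat (card {m+1..n}) * B" by (rule sum_bounded_above) (use h in auto)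
        finally show ?thesis by simp
      qed
      have k0: "real k > 0" using kK by simp
      have "real (n - m) \<le> (real k + 1) powr p - real k powr p"
        using mn mge nk1 by (simp add: of_nat_diff)
      also have "\<dots> \<le> p * (real k + 1) powr (p-1)" by (rule powr_diff_bound) (use p1 k0 in auto)
      also have "\<dots> \<le> p * (2 * r) powr (p-1)"
        using kr k0 p1 by (intro mult_left_mono powr_mono2) auto
      also have "\<dots> = D * real n powr \<eta>0"
        unfolding D_def r_def using p1 n1 by (simp add: powr_mult powr_powr pe2)
      finally have nm: "real (n - m) \<le> D * real n powr \<eta>0" .
      have T2: "\<bar>\<Sum>j\<in>{m+1..n}. X j x\<bar> \<le> D * \<bar>B\<bar> * real n powr \<eta>0"
      proof -
        have "real (n - m) * B \<le> real (n - m) * \<bar>B\<bar>" by (simp add: mult_left_mono)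
        also have "\<dots> \<le> D * real n powr \<eta>0 * \<bar>B\<bar>" by (rule mult_right_mono[OF nm]) simp
        finally show ?thesis using T by (simp add: mult_ac)
      qed
      have Sm: "\<bar>S m x\<bar> \<le> real n powr \<eta>0"
      proof -
        have "\<bar>S m x\<bar> < real m powr \<eta>0" unfolding m_def using K kK by simp
        also have "\<dots> \<le> real n powr \<eta>0" using mn e1 by (intro powr_mono2) auto
        finally show ?thesis by simp
      qed
      have "\<bar>S n x\<bar> \<le> (1 + D * \<bar>B\<bar>) * real n powr \<eta>0"
        using split Sm T2 by (simp add: algebra_simps)
      also have "\<dots> \<le> (1 + D * \<bar>B\<bar>) * real n powr \<eta>"
        using D0 n1 e1 by (intro mult_left_mono powr_mono) auto
      finally show ?thesis .
    qed
    show "(\<lambda>n. \<Sum>k=1..n. X k x) \<in> O(\<lambda>n. real n powr \<eta>)"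
    proof (rule bigoI[where c="1 + D * \<bar>B\<bar>"])
      show "\<forall>\<^sub>F n in at_top. norm (\<Sum>k=1..n. X k x) \<le> (1 + D * \<bar>B\<bar>) * norm (real n powr \<eta>)"
        unfolding eventually_at_top_linorder using bnd unfolding S_def by auto
    qed
  qed
qed

end
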